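(* For every $\omega\in\{0,1\}^n$, the stabilization time of $\omega$ equals $\mathrm{Depth}(Y(\omega))$.
   Context: $\mathbb N=\{1,2,\dots\}$. A Young diagram is a finite down-closed set $Y\subseteq\mathbb N\times\mathbb N$ (i.e. $(i,j)\in Y$, $i'\le i$, $j'\le j$ imply $(i',j')\in Y$). For $\omega\in\{0,1\}^n$ with $U$ ones, $Y(\omega)=\{(i,j)\in\mathbb N\times\mathbb N: i\le n-U,\ j\le\text{the number of 1's of }\omega\text{ after the }i\text{-th 0 of }\omega\}$. For nonempty $Y$, $\mathrm{Depth}(Y)=\max\{i+j-1:(i,j)\in Y\}$; $\mathrm{Depth}(\emptyset)=0$. One step of the evolution replaces simultaneously every occurrence of the consecutive substring "01" by "10"; the stabilization time is the number of steps needed to reach a string of the form $1\cdots10\cdots0$. *)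

theory Defs
  imports Main
begin

text \<open>Binary strings \<omega> \<in> {0,1}^n are modelled as bool lists: True = 1, False = 0.\<close>

text \<open>One step: simultaneously replace every occurrence of 01 by 10.
  Occurrences of 01 never overlap, so a left-to-right scan realises it.\<close>
fun evo_step :: "bool list \<Rightarrow> bool list" where
  "evo_step (False # True # xs) = True # False # evo_step xs"
| "evo_step (x # xs) = x # evo_step xs"
| "evo_step [] = []"

definition is_stable :: "bool list \<Rightarrow> bool" where
  "is_stable w \<longleftrightarrow> (\<exists>a b. w = replicate a True @ replicate b False)"

definition stab_time :: "bool list \<Rightarrow> nat" where
  "stab_time w = (LEAST k. is_stable ((evo_step ^^ k) w))"

definition num_ones :: "bool list \<Rightarrow> nat" where
  "num_ones w = length (filter id w)"

text \<open>Number of 1's of w lying after the i-th 0 of w (positions p holding a 1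
  with at least i zeros strictly before p).\<close>
definition ones_after_zero :: "bool list \<Rightarrow> nat \<Rightarrow> nat" where
  "ones_after_zero w i =
     card {p. p < length w \<and> w ! p \<and> i \<le> card {q. q < p \<and> \<not> w ! q}}"

definition young_of :: "bool list \<Rightarrow> (nat \<times> nat) set" where
  "young_of w = {(i, j). 1 \<le> i \<and> i \<le> length w - num_ones w \<and>
                         1 \<le> j \<and> j \<le> ones_after_zero w i}"

definition Depth :: "(nat \<times> nat) set \<Rightarrow> nat" where
  "Depth Y = (if Y = {} then 0 else Max ((\<lambda>(i, j). i + j - 1) ` Y))"

end

theory Submission imports Defs begin
lemma evo_length[simp]: "length (evo_step w) = length w"
  by (induction w rule: evo_step.induct) auto
lemma evo_append: "\<not> (xs \<noteq> [] \<and> ys \<noteq> [] \<and> \<not> last xs \<and> hd ys) \<Longrightarrow>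
   evo_step (xs @ ys) = evo_step xs @ evo_step ys"
  apply (induction xs rule: evo_step.induct)
  apply (auto split: if_splits)
  subgoal for x by (cases ys; cases x) auto
  done

definition zs :: "bool list \<Rightarrow> nat" where "zs xs = length (filter Not xs)"
definition os :: "bool list \<Rightarrow> nat" where "os xs = length (filter id xs)"
definition fv :: "bool list \<Rightarrow> nat \<Rightarrow> nat" where "fv w m = zs (take m w) + os (drop m w)"
definition valid :: "bool list \<Rightarrow> nat \<Rightarrow> bool" where
  "valid w m = (0 < zs (take m w) \<and> 0 < os (drop m w))"
definition peak :: "bool list \<Rightarrow> nat \<Rightarrow> bool" where
  "peak w m = (0 < m \<and> m < length w \<and> \<not> w!(m-1) \<and> w!m)"
definition DD :: "bool list \<Rightarrow> nat" where
  "DD w = (if \<exists>m. valid w m then Max (fv w ` {m. valid w m}) - 1 else 0)"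

lemma zs_evo[simp]: "zs (evo_step w) = zs w"
  by (induction w rule: evo_step.induct) (auto simp: zs_def)
lemma os_evo[simp]: "os (evo_step w) = os w"
  by (induction w rule: evo_step.induct) (auto simp: os_def)
lemma zs_app[simp]: "zs (xs @ ys) = zs xs + zs ys" and zs_Cons[simp]: "zs (x # xs) = (if x then 0 else 1) + zs xs"
  and zs_Nil[simp]: "zs [] = 0"
  by (auto simp: zs_def)
lemma os_app[simp]: "os (xs @ ys) = os xs + os ys" and os_Cons[simp]: "os (x # xs) = (if x then 1 else 0) + os xs"
  and os_Nil[simp]: "os [] = 0"
  by (auto simp: os_def)

lemma W1: "m < length w \<Longrightarrow> zs (take (Suc m) w) = zs (take m w) + (if w!m then 0 else 1)"
  by (simp add: take_Suc_conv_app_nth)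
lemma W2: "m < length w \<Longrightarrow> os (drop m w) = os (drop (Suc m) w) + (if w!m then 1 else 0)"
  by (simp add: Cons_nth_drop_Suc[symmetric])

lemma valid_lt: "valid w m \<Longrightarrow> m < length w"
  unfolding valid_def by (metis drop_all not_less os_Nil less_irrefl)

lemma split_nopeak: "m \<le> length w \<Longrightarrow> \<not> peak w m \<Longrightarrow>
   evo_step w = evo_step (take m w) @ evo_step (drop m w)"
proof -
  assume a: "m \<le> length w" "\<not> peak w m"
  have "\<not> (take m w \<noteq> [] \<and> drop m w \<noteq> [] \<and> \<not> last (take m w) \<and> hd (drop m w))"
  proof
    assume h: "take m w \<noteq> [] \<and> drop m w \<noteq> [] \<and> \<not> last (take m w) \<and> hd (drop m w)"
    then have "0 < m" "m < length w" by auto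
    moreover have "last (take m w) = w!(m-1)" using h \<open>0<m\<close> \<open>m < length w\<close>
      by (subst last_conv_nth) (auto simp: min_def)
    moreover have "hd (drop m w) = w!m" using \<open>m < length w\<close> by (simp add: hd_drop_conv_nth)
    ultimately show False using a h by (auto simp: peak_def)
  qed
  then show ?thesis using evo_append[of "take m w" "drop m w"] by simp
qed

lemma peak_decomp: "peak w m \<Longrightarrow> w = take (m-1) w @ False # True # drop (Suc m) w"
proof -
  assume p: "peak w m"
  have "drop (m-1) w = w!(m-1) # drop (Suc (m-1)) w"
    by (rule Cons_nth_drop_Suc[symmetric]) (use p in \<open>auto simp: peak_def\<close>)
  then have "drop (m-1) w = w!(m-1) # drop m w" using p by (simp add: peak_def)
  also have "drop m w = w!m # drop (Suc m) w"
    by (rule Cons_nth_drop_Suc[symmetric]) (use p in \<open>simp add: peak_def\<close>)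
  finally have "w = take (m-1) w @ w!(m-1) # w!m # drop (Suc m) w"
    by (metis append_take_drop_id)
  then show ?thesis using p by (simp add: peak_def)
qed

lemma split_peak: "peak w m \<Longrightarrow>
   evo_step w = evo_step (take (m-1) w) @ True # False # evo_step (drop (Suc m) w)"
proof -
  assume p: "peak w m"
  have "evo_step w = evo_step (take (m-1) w @ False # True # drop (Suc m) w)"
    using peak_decomp[OF p] by metis
  also have "\<dots> = evo_step (take (m-1) w) @ evo_step (False # True # drop (Suc m) w)"
    by (rule evo_append) simp
  finally show ?thesis by simp
qed

lemma fv_nopeak: "m \<le> length w \<Longrightarrow> \<not> peak w m \<Longrightarrow> fv (evo_step w) m = fv w m"
  using split_nopeak[of m w] by (simp add: fv_def)

lemma peak_take: "peak w m \<Longrightarrow> length (take (m-1) w) = m - 1"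
  by (auto simp: peak_def)

lemma tk: "length xs = m \<Longrightarrow> take m (xs @ ys) = xs \<and> drop m (xs @ ys) = ys" by auto

lemma fv_peak: "peak w m \<Longrightarrow> fv (evo_step w) m + 2 = fv w m"
proof -
  assume p: "peak w m"
  have m: "0 < m" "m < length w" using p by (auto simp: peak_def)
  let ?A = "take (m-1) w" let ?B = "drop (Suc m) w"
  have e1: "evo_step w = (evo_step ?A @ [True]) @ (False # evo_step ?B)" using split_peak[OF p] by simp
  have e2: "w = (?A @ [False]) @ (True # ?B)" using peak_decomp[OF p] by simp
  have l: "length (evo_step ?A @ [True]) = m" "length (?A @ [False]) = m" using m by auto
  have "fv (evo_step w) m = zs (evo_step ?A @ [True]) + os (False # evo_step ?B)"
    unfolding fv_def using tk[OF l(1), of "False # evo_step ?B"] e1 by metis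
  also have "fv w m = zs (?A @ [False]) + os (True # ?B)"
    unfolding fv_def using tk[OF l(2), of "True # ?B"] e2 by metis
  ultimately show ?thesis by simp
qed
lemma valid_evo: "valid (evo_step w) m \<Longrightarrow> valid w m"
proof -
  assume v: "valid (evo_step w) m"
  have m: "m < length w" using valid_lt[OF v] by simp
  show ?thesis
  proof (cases "peak w m")
    case True
    have "zs (take m w) = zs (take (m-1) w) + 1" using W1[of "m-1" w] True
      by (auto simp: peak_def)
    moreover have "os (drop m w) = os (drop (Suc m) w) + 1" using W2[of m w] True
      by (auto simp: peak_def)
    ultimately show ?thesis by (simp add: valid_def)
  next
    case False
    have "take m (evo_step w) = evo_step (take m w)" "drop m (evo_step w) = evo_step (drop m w)"
      using split_nopeak[OF _ False] m tk[of "evo_step (take m w)" m "evo_step (drop m w)"]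
      by auto
    then show ?thesis using v by (simp add: valid_def)
  qed
qed

lemma valid_fv: "valid w m \<Longrightarrow> 2 \<le> fv w m"
  by (simp add: valid_def fv_def)

lemma max_peak:
  assumes v: "valid w m" and mx: "\<And>m'. valid w m' \<Longrightarrow> fv w m' \<le> fv w m"
  shows "peak w m"
proof -
  have m: "m < length w" using valid_lt[OF v] .
  have wm: "w!m"
  proof (rule ccontr)
    assume "\<not> w!m"
    then have "zs (take (Suc m) w) = zs (take m w) + 1" "os (drop (Suc m) w) = os (drop m w)"
      using W1[OF m] W2[OF m] by auto
    then have "valid w (Suc m)" "fv w (Suc m) = fv w m + 1" using v by (auto simp: valid_def fv_def)
    then show False using mx[of "Suc m"] by simp
  qed
  have m0: "0 < m" using v by (cases m) (auto simp: valid_def)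
  have wm1: "\<not> w!(m-1)"
  proof
    assume h: "w!(m-1)"
    have "zs (take m w) = zs (take (m-1) w)" "os (drop (m-1) w) = os (drop m w) + 1"
      using W1[of "m-1" w] W2[of "m-1" w] m m0 h by auto
    then have "valid w (m-1)" "fv w (m-1) = fv w m + 1" using v by (auto simp: valid_def fv_def)
    then show False using mx[of "m-1"] by simp
  qed
  show ?thesis using m m0 wm wm1 by (simp add: peak_def)
qed

lemma valid_fin: "finite {m. valid w m}"
  by (rule finite_subset[of _ "{..<length w}"]) (auto dest: valid_lt)

lemma DD_step:
  assumes ex: "\<exists>m. valid w m"
  shows "DD (evo_step w) = DD w - 1"
proof -
  let ?V = "{m. valid w m}"
  define M where "M = Max (fv w ` ?V)"
  have fin: "finite (fv w ` ?V)" using valid_fin by simp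
  have ne: "fv w ` ?V \<noteq> {}" using ex by auto
  obtain m where mV: "valid w m" and fm: "fv w m = M"
    using Max_in[OF fin ne] unfolding M_def by auto
  have le: "\<And>m'. valid w m' \<Longrightarrow> fv w m' \<le> M"
    unfolding M_def using fin by auto
  have DDw: "DD w = M - 1" using ex by (simp add: DD_def M_def)
  have pk: "peak w m" using max_peak[OF mV] le fm by simp
  have M2: "2 \<le> M" using valid_fv[OF mV] fm by simp
  have pk_max: "\<And>m'. valid w m' \<Longrightarrow> fv w m' = M \<Longrightarrow> peak w m'"
    using max_peak le by metis
  let ?w = "evo_step w"
  have up: "\<And>m'. valid ?w m' \<Longrightarrow> fv ?w m' + 1 \<le> M"
  proof -
    fix m' assume v': "valid ?w m'"
    have v: "valid w m'" using valid_evo[OF v'] .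
    show "fv ?w m' + 1 \<le> M"
    proof (cases "peak w m'")
      case True then show ?thesis using fv_peak[OF True] le[OF v] by simp
    next
      case False
      have "fv ?w m' = fv w m'" using fv_nopeak[OF _ False] valid_lt[OF v] by simp
      moreover have "fv w m' \<noteq> M" using pk_max[OF v] False by blast
      ultimately show ?thesis using le[OF v] by simp
    qed
  qed
  have upper: "DD ?w \<le> M - 2"
  proof (cases "\<exists>m. valid ?w m")
    case True
    have "Max (fv ?w ` {m. valid ?w m}) \<le> M - 1"
      using True valid_fin[of ?w] up by (subst Max_le_iff) fastforce+
    then show ?thesis using True by (simp add: DD_def)
  next
    case False then show ?thesis by (simp add: DD_def)
  qed
  have p: "0 < m" "m < length w" "\<not> w!(m-1)" "w!m" using pk by (auto simp: peak_def)
  have f1: "fv w (m-1) + 1 = M"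
    using W1[of "m-1" w] W2[of "m-1" w] p fm by (simp add: fv_def)
  have f2: "fv w (Suc m) + 1 = M"
    using W1[of m w] W2[of m w] p fm by (simp add: fv_def)
  have np1: "\<not> peak w (m-1)" using p by (simp add: peak_def)
  have np2: "\<not> peak w (Suc m)" using p by (simp add: peak_def)
  have g1: "fv ?w (m-1) + 1 = M" using fv_nopeak[OF _ np1] p f1 by simp
  have g2: "fv ?w (Suc m) + 1 = M" using fv_nopeak[OF _ np2] p f2 by simp
  have lower: "M - 2 \<le> DD ?w"
  proof (cases "valid ?w (m-1) \<or> valid ?w (Suc m)")
    case True
    then obtain k where k: "valid ?w k" "fv ?w k + 1 = M" using g1 g2 by blast
    have "fv ?w k \<le> Max (fv ?w ` {m. valid ?w m})"
      using k valid_fin[of ?w] by auto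
    then show ?thesis using k by (auto simp: DD_def)
  next
    case False
    let ?A = "take (m-1) w" let ?B = "drop (Suc m) w"
    have e1: "?w = evo_step ?A @ (True # False # evo_step ?B)" using split_peak[OF pk] by simp
    have e1': "?w = (evo_step ?A @ [True, False]) @ evo_step ?B" using split_peak[OF pk] by simp
    have l1: "length (evo_step ?A) = m - 1" using p by simp
    have l2: "length (evo_step ?A @ [True, False]) = Suc m" using p by simp
    have t1: "take (m-1) ?w = evo_step ?A" "drop (m-1) ?w = True # False # evo_step ?B"
      using tk[OF l1, of "True # False # evo_step ?B"] e1 by metis+
    have t2: "take (Suc m) ?w = evo_step ?A @ [True, False]" "drop (Suc m) ?w = evo_step ?B"
      using tk[OF l2, of "evo_step ?B"] e1' by metis+
    have "zs ?A = 0" using False t1 by (simp add: valid_def)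
    moreover have "os ?B = 0" using False t2 by (simp add: valid_def)
    moreover have "zs (take m w) = zs ?A + 1" using W1[of "m-1" w] p by simp
    moreover have "os (drop m w) = os ?B + 1" using W2[of m w] p by simp
    ultimately have "M = 2" using fm by (simp add: fv_def)
    then show ?thesis by simp
  qed
  show ?thesis using upper lower DDw by simp
qed
lemma os_drop_le: "os (drop k w) \<le> os w"
proof -
  have "os w = os (take k w) + os (drop k w)" by (metis append_take_drop_id os_app)
  then show ?thesis by simp
qed

lemma ex_valid_Cons: "(\<exists>m. valid (x#w) m) \<longleftrightarrow> (if x then \<exists>k. valid w k else 0 < os w)"
proof
  assume "\<exists>m. valid (x#w) m"
  then obtain m where v: "valid (x#w) m" by blast
  then obtain k where k: "m = Suc k" by (cases m) (auto simp: valid_def)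
  show "if x then \<exists>k. valid w k else 0 < os w"
    using v k os_drop_le[of k w] by (auto simp: valid_def split: if_splits)
next
  assume h: "if x then \<exists>k. valid w k else 0 < os w"
  show "\<exists>m. valid (x#w) m"
  proof (cases x)
    case True then obtain k where "valid w k" using h by auto
    then have "valid (x#w) (Suc k)" using True by (simp add: valid_def)
    then show ?thesis by blast
  next
    case False then have "valid (x#w) 1" using h by (simp add: valid_def)
    then show ?thesis by blast
  qed
qed

lemma os_zero: "os w = 0 \<longleftrightarrow> w = replicate (length w) False"
proof
  assume "os w = 0"
  then have "\<forall>y\<in>set w. y = False" by (auto simp: os_def filter_empty_conv)
  then show "w = replicate (length w) False" by (simp add: replicate_length_same)
next
  assume "w = replicate (length w) False"
  then show "os w = 0" by (metis os_def filter_False length_0_conv id_apply in_set_replicate)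
qed

lemma stable_Cons: "is_stable (x#w) \<longleftrightarrow> (if x then is_stable w else os w = 0)"
proof (cases x)
  case True
  show ?thesis
  proof
    assume "is_stable (x#w)"
    then obtain a b where e: "x#w = replicate a True @ replicate b False" by (auto simp: is_stable_def)
    then have "w = replicate (a-1) True @ replicate b False" using True by (cases a; cases b) auto
    then have "is_stable w" unfolding is_stable_def by blast
    then show "if x then is_stable w else os w = 0" using True by simp
  next
    assume "if x then is_stable w else os w = 0"
    then obtain a b where "w = replicate a True @ replicate b False" using True by (auto simp: is_stable_def)
    then have "x#w = replicate (Suc a) True @ replicate b False" using True by simp
    then show "is_stable (x#w)" unfolding is_stable_def by blast
  qed
next
  case False
  show ?thesis
  proof
    assume "is_stable (x#w)"
    then obtain a b where e: "x#w = replicate a True @ replicate b False" by (auto simp: is_stable_def)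
    then have "w = replicate (b-1) False" using False by (cases a; cases b) auto
    then show "if x then is_stable w else os w = 0" using False os_zero by auto
  next
    assume "if x then is_stable w else os w = 0"
    then have "x#w = replicate 0 True @ replicate (Suc (length w)) False" using False os_zero by auto
    then show "is_stable (x#w)" unfolding is_stable_def by blast
  qed
qed

lemma stable_valid: "is_stable w \<longleftrightarrow> \<not> (\<exists>m. valid w m)"
proof (induction w)
  case Nil
  have "is_stable []" unfolding is_stable_def by (rule exI[of _ 0], rule exI[of _ 0]) simp
  then show ?case by (simp add: valid_def)
next
  case (Cons x w)
  then show ?case by (simp add: stable_Cons ex_valid_Cons)
qed

lemma DD_zero: "DD w = 0 \<longleftrightarrow> \<not> (\<exists>m. valid w m)"
proof
  assume h: "DD w = 0"
  show "\<not> (\<exists>m. valid w m)"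
  proof
    assume ex: "\<exists>m. valid w m"
    then obtain m where v: "valid w m" by blast
    have "fv w m \<le> Max (fv w ` {m. valid w m})" using v valid_fin[of w] by auto
    then show False using h ex valid_fv[OF v] by (simp add: DD_def)
  qed
qed (simp add: DD_def)

lemma stable_iter: "is_stable ((evo_step ^^ k) w) \<longleftrightarrow> DD w \<le> k"
proof (induction k arbitrary: w)
  case 0 then show ?case by (simp add: stable_valid DD_zero)
next
  case (Suc k)
  have e: "(evo_step ^^ Suc k) w = (evo_step ^^ k) (evo_step w)" by (simp only: funpow_Suc_right comp_apply)
  show ?case
  proof (cases "\<exists>m. valid w m")
    case True
    have "DD w \<noteq> 0" using True DD_zero by blast
    then show ?thesis using e Suc DD_step[OF True] by (simp; linarith)
  next
    case False
    then have "\<not> (\<exists>m. valid (evo_step w) m)" using valid_evo by blast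
    then have "DD (evo_step w) = 0" "DD w = 0" using False DD_zero by blast+
    then show ?thesis using e Suc by simp
  qed
qed

lemma stab_time_DD: "stab_time w = DD w"
  unfolding stab_time_def stable_iter
  by (rule Least_equality) auto
lemma Zc: "p \<le> length w \<Longrightarrow> card {q. q < p \<and> \<not> w!q} = zs (take p w)"
proof -
  assume p: "p \<le> length w"
  have "zs (take p w) = card {i. i < length (take p w) \<and> Not (take p w ! i)}"
    unfolding zs_def by (rule length_filter_conv_card)
  also have "{i. i < length (take p w) \<and> Not (take p w ! i)} = {q. q < p \<and> \<not> w!q}"
    using p by auto
  finally show ?thesis by simp
qed

lemma Oc: "card {p. m \<le> p \<and> p < length w \<and> w!p} = os (drop m w)"
proof -
  have "os (drop m w) = card {i. i < length (drop m w) \<and> id (drop m w ! i)}"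
    unfolding os_def by (rule length_filter_conv_card)
  also have "{i. i < length (drop m w) \<and> id (drop m w ! i)} = {i. i < length w - m \<and> w!(m+i)}"
    by auto
  also have "card \<dots> = card ((\<lambda>i. m + i) ` {i. i < length w - m \<and> w!(m+i)})"
    by (rule card_image[symmetric]) (simp add: inj_on_def)
  also have "(\<lambda>i. m + i) ` {i. i < length w - m \<and> w!(m+i)} = {p. m \<le> p \<and> p < length w \<and> w!p}"
  proof (rule set_eqI)
    fix p show "p \<in> (\<lambda>i. m + i) ` {i. i < length w - m \<and> w!(m+i)} \<longleftrightarrow> p \<in> {p. m \<le> p \<and> p < length w \<and> w!p}"
    proof
      assume "p \<in> {p. m \<le> p \<and> p < length w \<and> w!p}"
      then have "p - m \<in> {i. i < length w - m \<and> w!(m+i)}" "p = m + (p - m)" by auto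
      then show "p \<in> (\<lambda>i. m + i) ` {i. i < length w - m \<and> w!(m+i)}" by blast
    qed auto
  qed
  finally show ?thesis by simp
qed

lemma zs_mono: "p \<le> q \<Longrightarrow> zs (take p w) \<le> zs (take q w)"
proof -
  assume "p \<le> q"
  then have "take q w = take p w @ take (q-p) (drop p w)" by (metis le_add_diff_inverse take_add)
  then show ?thesis by (metis zs_app le_add1)
qed

lemma zeros_count: "length w - num_ones w = zs w"
  using sum_length_filter_compl[of id w] unfolding num_ones_def zs_def
  by (simp add: comp_def)

lemma young_A:
  assumes "(i, j) \<in> young_of w"
  shows "\<exists>m. valid w m \<and> i + j \<le> fv w m"
proof -
  let ?n = "length w"
  have ij: "1 \<le> i" "i \<le> zs w" "1 \<le> j" "j \<le> ones_after_zero w i"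
    using assms zeros_count[of w] by (auto simp: young_of_def)
  define m0 where "m0 = (LEAST p. i \<le> zs (take p w))"
  have ex: "i \<le> zs (take ?n w)" using ij by simp
  have m0n: "m0 \<le> ?n" unfolding m0_def by (rule Least_le) (rule ex)
  have im0: "i \<le> zs (take m0 w)" unfolding m0_def by (rule LeastI) (rule ex)
  have sub: "{p. p < ?n \<and> w ! p \<and> i \<le> card {q. q < p \<and> \<not> w ! q}} \<subseteq> {p. m0 \<le> p \<and> p < ?n \<and> w!p}"
  proof
    fix p assume "p \<in> {p. p < ?n \<and> w ! p \<and> i \<le> card {q. q < p \<and> \<not> w ! q}}"
    then have p: "p < ?n" "w!p" "i \<le> zs (take p w)" using Zc[of p w] by auto
    have "m0 \<le> p" unfolding m0_def by (rule Least_le) (rule p(3))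
    then show "p \<in> {p. m0 \<le> p \<and> p < ?n \<and> w!p}" using p by auto
  qed
  have "ones_after_zero w i \<le> card {p. m0 \<le> p \<and> p < ?n \<and> w!p}"
    unfolding ones_after_zero_def by (rule card_mono[OF _ sub]) simp
  then have c: "j \<le> os (drop m0 w)" using ij Oc[of m0 w] by simp
  have "valid w m0" using im0 c ij by (simp add: valid_def)
  moreover have "i + j \<le> fv w m0" using im0 c by (simp add: fv_def)
  ultimately show ?thesis by blast
qed

lemma young_B:
  assumes v: "valid w m"
  shows "(zs (take m w), os (drop m w)) \<in> young_of w"
proof -
  let ?n = "length w" let ?i = "zs (take m w)"
  have m: "m < ?n" using valid_lt[OF v] .
  have i1: "?i \<le> zs w" using zs_mono[of m ?n w] m by simp
  have sub: "{p. m \<le> p \<and> p < ?n \<and> w!p} \<subseteq> {p. p < ?n \<and> w ! p \<and> ?i \<le> card {q. q < p \<and> \<not> w ! q}}"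
  proof
    fix p assume p: "p \<in> {p. m \<le> p \<and> p < ?n \<and> w!p}"
    then have "?i \<le> zs (take p w)" using zs_mono[of m p w] by auto
    then show "p \<in> {p. p < ?n \<and> w ! p \<and> ?i \<le> card {q. q < p \<and> \<not> w ! q}}"
      using p Zc[of p w] by auto
  qed
  have "os (drop m w) \<le> ones_after_zero w ?i"
    unfolding ones_after_zero_def Oc[symmetric] by (rule card_mono[OF _ sub]) simp
  then show ?thesis using v i1 zeros_count[of w] by (simp add: young_of_def valid_def)
qed

lemma young_fin: "finite (young_of w)"
proof (rule finite_subset)
  show "young_of w \<subseteq> {..length w} \<times> {..length w}"
  proof
    fix x assume x: "x \<in> young_of w"
    obtain i j where e: "x = (i, j)" by (cases x)
    have "ones_after_zero w i \<le> card {..<length w}"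
      unfolding ones_after_zero_def by (rule card_mono) auto
    then show "x \<in> {..length w} \<times> {..length w}" using x e by (auto simp: young_of_def)
  qed
qed simp

lemma Depth_DD: "Depth (young_of w) = DD w"
proof (cases "\<exists>m. valid w m")
  case False
  then have "young_of w = {}" using young_A by fastforce
  then show ?thesis using False by (simp add: Depth_def DD_def)
next
  case True
  let ?V = "{m. valid w m}"
  let ?g = "\<lambda>(i::nat, j::nat). i + j - 1"
  obtain m where mV: "valid w m" using True by blast
  have ne: "young_of w \<noteq> {}" using young_B[OF mV] by blast
  have finY: "finite (?g ` young_of w)" using young_fin by simp
  have finV: "finite (fv w ` ?V)" using valid_fin by simp
  have neV: "fv w ` ?V \<noteq> {}" using True by auto
  have le1: "Max (?g ` young_of w) \<le> Max (fv w ` ?V) - 1"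
  proof (subst Max_le_iff[OF finY], use ne in simp, intro ballI)
    fix y assume "y \<in> ?g ` young_of w"
    then obtain i j where ij: "(i,j) \<in> young_of w" "y = i + j - 1" by auto
    obtain m where "valid w m" "i + j \<le> fv w m" using young_A[OF ij(1)] by blast
    moreover have "fv w m \<le> Max (fv w ` ?V)" using calculation finV by auto
    ultimately show "y \<le> Max (fv w ` ?V) - 1" using ij by simp
  qed
  obtain m1 where m1: "valid w m1" "fv w m1 = Max (fv w ` ?V)" using Max_in[OF finV neV] by auto
  have "?g (zs (take m1 w), os (drop m1 w)) \<le> Max (?g ` young_of w)"
    by (rule Max_ge[OF finY], rule imageI[OF young_B[OF m1(1)]])
  then have le2: "Max (fv w ` ?V) - 1 \<le> Max (?g ` young_of w)" using m1 by (simp add: fv_def)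
  show ?thesis using le1 le2 ne True by (simp add: Depth_def DD_def)
qed

theorem proposition2p7:
  fixes \<omega> :: "bool list"
  shows "stab_time \<omega> = Depth (young_of \<omega>)"
  by (simp add: stab_time_DD Depth_DD)
end
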